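(* For every zero-error variable-length $(k,N)$ network code for the network in the context and every $\boldsymbol\sigma\in\{0,1,2,3\}^k$ having exactly $x$ components equal to $1$ and $y$ components equal to $2$, $$H(\mathbf Z_1^N,\mathbf Z_2^N\mid\boldsymbol\Sigma=\boldsymbol\sigma)\ \ge\ H(\mathbf p^\star_{x,y}).$$
   Context: Network: sources $s_1,s_2,s_3$, terminal $t$, edges $(s_3,s_1),(s_3,s_2),(s_1,t),(s_2,t)$; $s_j$ observes $\mathbf X_j\in\{0,1\}^k$, all $3k$ bits i.i.d. uniform; $s_1,s_2$ receive $\mathbf X_3$. $\mathcal Z$ is a finite alphabet, $|\mathcal Z|\ge2$. A variable-length $(k,N)$ network code: encoders $\phi_1,\phi_2:\{0,1\}^k\times\{0,1\}^k\to\mathcal Z^*$ giving sequences $\mathbf Z_1=\phi_1(\mathbf X_1,\mathbf X_3)$, $\mathbf Z_2=\phi_2(\mathbf X_2,\mathbf X_3)$; a positive-integer-valued stopping time $N$ for the sequence of pairs $(\mathbf Z_1(m),\mathbf Z_2(m))_{m\ge1}$; a decoder $\hat{\boldsymbol\Sigma}=\psi(\mathbf Z_1^N,\mathbf Z_2^N)$, $\mathbf Z_j^N$ the first $N$ symbols of $\mathbf Z_j$. $\boldsymbol\Sigma=\mathbf X_1+\mathbf X_2+\mathbf X_3$ (componentwise integer sum); zero-error means $\Pr(\hat{\boldsymbol\Sigma}\ne\boldsymbol\Sigma)=0$. Clumpy distribution: for $m=x+y$, $L=2^m$, $M=3^m$, let $n_1\ge n_2\ge\dots\ge n_L$ be the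 list in which, for each $u=0,1,\dots,m$, the value $2^{m-u}$ appears exactly $\binom mu$ times (so $\sum_in_i=M$); let $\mathbf e_i^\star\in\{0,1\}^L$ have ones in its first $n_i$ positions and zeros elsewhere; $\mathbf p^\star_{x,y}=\frac1M\sum_{i=1}^L\mathbf e_i^\star$. $H$ denotes Shannon entropy in bits. *)

theory Defs
  imports "HOL-Probability.Probability"
begin

definition bitvecs :: "nat \<Rightarrow> nat list set" where
  "bitvecs k = {xs. length xs = k \<and> set xs \<subseteq> {0, 1}}"

definition outcomes :: "nat \<Rightarrow> (nat list \<times> nat list \<times> nat list) set" where
  "outcomes k = bitvecs k \<times> bitvecs k \<times> bitvecs k"

definition source_pmf :: "nat \<Rightarrow> (nat list \<times> nat list \<times> nat list) pmf" where
  "source_pmf k = pmf_of_set (outcomes k)"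

definition Sigma_sum :: "nat \<Rightarrow> nat list \<times> nat list \<times> nat list \<Rightarrow> nat list" where
  "Sigma_sum k \<omega> = (case \<omega> of (x1, x2, x3) \<Rightarrow> map (\<lambda>i. x1 ! i + x2 ! i + x3 ! i) [0..<k])"

text \<open>First n symbols of a sequence (symbol m of the paper, m \<ge> 1, is index m-1 here).\<close>
definition prefix_seq :: "nat \<Rightarrow> (nat \<Rightarrow> 'z) \<Rightarrow> 'z list" where
  "prefix_seq n Z = map Z [0..<n]"

text \<open>A zero-error variable-length (k,N) network code: encoders phi1, phi2 (phi_j gets
  X_j and X_3), a positive-integer-valued stopping time N (a random variable on the outcome
  space such that whether N = n is determined by the first n pairs (Z1(m), Z2(m))), and a
  decoder psi applied to the first N symbols of Z1 and Z2, with Pr(decoded \<noteq> Sigma) = 0.\<close>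
definition zero_error_vl_code ::
  "nat \<Rightarrow> (nat list \<Rightarrow> nat list \<Rightarrow> nat \<Rightarrow> 'z) \<Rightarrow> (nat list \<Rightarrow> nat list \<Rightarrow> nat \<Rightarrow> 'z)
     \<Rightarrow> (nat list \<times> nat list \<times> nat list \<Rightarrow> nat) \<Rightarrow> ('z list \<Rightarrow> 'z list \<Rightarrow> nat list) \<Rightarrow> bool" where
  "zero_error_vl_code k \<phi>1 \<phi>2 N \<psi> \<longleftrightarrow>
     (\<forall>\<omega>\<in>outcomes k. N \<omega> \<ge> 1) \<and>
     (\<forall>x1 x2 x3 x1' x2' x3'. (x1, x2, x3) \<in> outcomes k \<longrightarrow> (x1', x2', x3') \<in> outcomes k \<longrightarrow>
        (\<forall>m < N (x1, x2, x3). \<phi>1 x1 x3 m = \<phi>1 x1' x3' m \<and> \<phi>2 x2 x3 m = \<phi>2 x2' x3' m) \<longrightarrow>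
        N (x1', x2', x3') = N (x1, x2, x3)) \<and>
     measure_pmf.prob (source_pmf k)
       {(x1, x2, x3). \<psi> (prefix_seq (N (x1, x2, x3)) (\<phi>1 x1 x3))
                          (prefix_seq (N (x1, x2, x3)) (\<phi>2 x2 x3))
                      \<noteq> Sigma_sum k (x1, x2, x3)} = 0"

definition code_output ::
  "(nat list \<Rightarrow> nat list \<Rightarrow> nat \<Rightarrow> 'z) \<Rightarrow> (nat list \<Rightarrow> nat list \<Rightarrow> nat \<Rightarrow> 'z)
     \<Rightarrow> (nat list \<times> nat list \<times> nat list \<Rightarrow> nat) \<Rightarrow> nat list \<times> nat list \<times> nat list \<Rightarrow> 'z list \<times> 'z list" where
  "code_output \<phi>1 \<phi>2 N \<omega> = (case \<omega> of (x1, x2, x3) \<Rightarrow>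
     (prefix_seq (N (x1, x2, x3)) (\<phi>1 x1 x3), prefix_seq (N (x1, x2, x3)) (\<phi>2 x2 x3)))"

definition entropy_pmf :: "'a pmf \<Rightarrow> real" where
  "entropy_pmf p = - (\<Sum>a\<in>set_pmf p. pmf p a * log 2 (pmf p a))"

definition entropy_vec :: "real list \<Rightarrow> real" where
  "entropy_vec ps = - (\<Sum>p\<leftarrow>ps. if p = 0 then 0 else p * log 2 p)"

definition cond_output_entropy ::
  "nat \<Rightarrow> (nat list \<Rightarrow> nat list \<Rightarrow> nat \<Rightarrow> 'z) \<Rightarrow> (nat list \<Rightarrow> nat list \<Rightarrow> nat \<Rightarrow> 'z)
     \<Rightarrow> (nat list \<times> nat list \<times> nat list \<Rightarrow> nat) \<Rightarrow> nat list \<Rightarrow> real" where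
  "cond_output_entropy k \<phi>1 \<phi>2 N \<sigma> =
     entropy_pmf (map_pmf (code_output \<phi>1 \<phi>2 N)
        (cond_pmf (source_pmf k) {\<omega>. Sigma_sum k \<omega> = \<sigma>}))"

definition clumpy_n :: "nat \<Rightarrow> nat list" where
  "clumpy_n m = concat (map (\<lambda>u. replicate (m choose u) (2 ^ (m - u))) [0..<m + 1])"

definition clumpy_e :: "nat \<Rightarrow> nat \<Rightarrow> real list" where
  "clumpy_e m i = map (\<lambda>j. if j < clumpy_n m ! i then 1 else 0) [0..<2 ^ m]"

definition clumpy_p :: "nat \<Rightarrow> nat \<Rightarrow> real list" where
  "clumpy_p x y = (let m = x + y in
     map (\<lambda>j. (\<Sum>i<2 ^ m. clumpy_e m i ! j) / 3 ^ m) [0..<2 ^ m])"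

end

theory Submission
  imports Defs
begin

definition Om :: "nat \<Rightarrow> nat list \<Rightarrow> (nat list \<times> nat list \<times> nat list) set" where
  "Om k \<sigma> = {\<omega> \<in> outcomes k. Sigma_sum k \<omega> = \<sigma>}"
definition RR :: "nat \<Rightarrow> nat list \<Rightarrow> nat set" where
  "RR k \<sigma> = {i. i < k \<and> (\<sigma>!i = 1 \<or> \<sigma>!i = 2)}"
definition gg :: "nat \<Rightarrow> nat list \<Rightarrow> nat list \<times> nat list \<times> nat list \<Rightarrow> nat set" where
  "gg k \<sigma> \<omega> = (case \<omega> of (a1, a2, a3) \<Rightarrow> {i \<in> RR k \<sigma>. Suc (a3!i) = \<sigma>!i})"
definition mk :: "nat \<Rightarrow> nat list \<Rightarrow> nat set \<Rightarrow> nat set \<Rightarrow> nat list \<times> nat list \<times> nat list" where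
  "mk k \<sigma> S T = (map (\<lambda>i. if i\<in>S then (if i\<in>T then 1 else 0) else if i \<in> RR k \<sigma> then \<sigma>!i - 1 else \<sigma>!i div 3) [0..<k],
     map (\<lambda>i. if i\<in>S then (if i\<in>T then 0 else 1) else if i \<in> RR k \<sigma> then \<sigma>!i - 1 else \<sigma>!i div 3) [0..<k],
     map (\<lambda>i. if i \<in> RR k \<sigma> then (if i\<in>S then \<sigma>!i - 1 else 2 - \<sigma>!i) else \<sigma>!i div 3) [0..<k])"

lemma bitvecs_iff: "xs \<in> bitvecs k \<longleftrightarrow> length xs = k \<and> (\<forall>i<k. xs!i \<le> 1)"
proof -
  have "set xs \<subseteq> {0,1} \<longleftrightarrow> (\<forall>i<length xs. xs!i \<le> 1)"
    by (auto simp: set_conv_nth le_Suc_eq)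
  then show ?thesis unfolding bitvecs_def by auto
qed

lemma Sigma_sum_iff: "length \<sigma> = k \<Longrightarrow> Sigma_sum k (a1, a2, a3) = \<sigma> \<longleftrightarrow> (\<forall>i<k. a1!i + a2!i + a3!i = \<sigma>!i)"
  unfolding Sigma_sum_def by (auto simp: list_eq_iff_nth_eq)

lemma Om_iff: "length \<sigma> = k \<Longrightarrow> (a1, a2, a3) \<in> Om k \<sigma> \<longleftrightarrow>
   a1 \<in> bitvecs k \<and> a2 \<in> bitvecs k \<and> a3 \<in> bitvecs k \<and> (\<forall>i<k. a1!i + a2!i + a3!i = \<sigma>!i)"
  unfolding Om_def outcomes_def using Sigma_sum_iff by auto

lemma pw1: fixes a b c s :: nat assumes "a \<le> 1" "b \<le> 1" "c \<le> 1" "a+b+c = s" "s \<noteq> 1" "s \<noteq> 2"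
  shows "a = s div 3 \<and> b = s div 3 \<and> c = s div 3"
  using assms by linarith

lemma pw2: fixes a b c s :: nat assumes "a \<le> 1" "b \<le> 1" "c \<le> 1" "a+b+c = s" "s = 1 \<or> s = 2" "Suc c \<noteq> s"
  shows "a = s - 1 \<and> b = s - 1 \<and> c = 2 - s"
  using assms by linarith

lemma pw3: fixes a b c s :: nat assumes "a \<le> 1" "b \<le> 1" "c \<le> 1" "a+b+c = s" "Suc c = s"
  shows "c = s - 1 \<and> b = 1 - a"
  using assms by linarith

context
  fixes k :: nat and \<sigma> :: "nat list"
  assumes len: "length \<sigma> = k" and s3: "\<forall>i<k. \<sigma>!i \<le> 3"
begin

lemma x3_det:
  assumes "(a1, a2, a3) \<in> Om k \<sigma>" "(b1, b2, b3) \<in> Om k \<sigma>" "gg k \<sigma> (a1, a2, a3) = gg k \<sigma> (b1, b2, b3)"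
  shows "a3 = b3"
proof (rule nth_equalityI)
  show "length a3 = length b3" using assms(1,2) len by (simp add: Om_iff bitvecs_iff)
  fix i assume "i < length a3"
  then have i: "i < k" using assms(1) len by (simp add: Om_iff bitvecs_iff)
  have A: "a1!i \<le> 1" "a2!i \<le> 1" "a3!i \<le> 1" "a1!i + a2!i + a3!i = \<sigma>!i"
    using assms(1) i len by (auto simp: Om_iff bitvecs_iff)
  have B: "b1!i \<le> 1" "b2!i \<le> 1" "b3!i \<le> 1" "b1!i + b2!i + b3!i = \<sigma>!i"
    using assms(2) i len by (auto simp: Om_iff bitvecs_iff)
  have mem: "i \<in> RR k \<sigma> \<Longrightarrow> (Suc (a3!i) = \<sigma>!i \<longleftrightarrow> Suc (b3!i) = \<sigma>!i)"
    using assms(3) unfolding gg_def by (auto simp: set_eq_iff)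
  show "a3!i = b3!i"
  proof (cases "i \<in> RR k \<sigma>")
    case True
    then have r: "\<sigma>!i = 1 \<or> \<sigma>!i = 2" unfolding RR_def by auto
    show ?thesis
    proof (cases "Suc (a3!i) = \<sigma>!i")
      case True
      then show ?thesis using mem \<open>i \<in> RR k \<sigma>\<close> by auto
    next
      case False
      then have "Suc (b3!i) \<noteq> \<sigma>!i" using mem \<open>i \<in> RR k \<sigma>\<close> by auto
      then show ?thesis using pw2[OF A r False] pw2[OF B r] by auto
    qed
  next
    case False
    then have "\<sigma>!i \<noteq> 1" "\<sigma>!i \<noteq> 2" using i unfolding RR_def by auto
    then show ?thesis using pw1[OF A] pw1[OF B] by auto
  qed
qed

lemma mk_in:
  assumes "S \<subseteq> RR k \<sigma>" "T \<subseteq> S"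
  shows "mk k \<sigma> S T \<in> Om k \<sigma>" "gg k \<sigma> (mk k \<sigma> S T) = S"
proof -
  have sv: "\<sigma>!i = 0 \<or> \<sigma>!i = 1 \<or> \<sigma>!i = 2 \<or> \<sigma>!i = 3" if "i < k" for i
    using s3 that by auto
  have SR: "i \<in> S \<Longrightarrow> \<sigma>!i = 1 \<or> \<sigma>!i = 2" "i \<in> S \<Longrightarrow> i < k" for i using assms unfolding RR_def by auto
  have d1: "\<sigma>!i div 3 \<le> Suc 0" if "i < k" for i using sv[OF that] by auto
  have d2: "\<sigma>!i div 3 + \<sigma>!i div 3 + \<sigma>!i div 3 = \<sigma>!i" if "i < k" "\<sigma>!i \<noteq> 1" "\<sigma>!i \<noteq> 2" for i
    using sv[OF that(1)] that by auto
  show "mk k \<sigma> S T \<in> Om k \<sigma>"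
    unfolding mk_def Om_iff[OF len] bitvecs_iff
    using sv SR assms(2) d1 d2 by (auto simp: RR_def)
  show "gg k \<sigma> (mk k \<sigma> S T) = S"
    unfolding mk_def gg_def using SR assms by (auto simp: RR_def split: if_splits)
qed

lemma RR_fin: "finite (RR k \<sigma>)" unfolding RR_def by auto

lemma mk_surj:
  assumes "(a1, a2, a3) \<in> Om k \<sigma>" "gg k \<sigma> (a1, a2, a3) = S"
  shows "(a1, a2, a3) = mk k \<sigma> S {i\<in>S. a1!i = 1}"
proof -
  have L: "length a1 = k" "length a2 = k" "length a3 = k" using assms(1) len by (auto simp: Om_iff bitvecs_iff)
  have A: "a1!i \<le> 1" "a2!i \<le> 1" "a3!i \<le> 1" "a1!i + a2!i + a3!i = \<sigma>!i" if "i < k" for i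
    using assms(1) that len by (auto simp: Om_iff bitvecs_iff)
  have Sm: "i \<in> S \<longleftrightarrow> i \<in> RR k \<sigma> \<and> Suc (a3!i) = \<sigma>!i" for i
    using assms(2) unfolding gg_def by auto
  have c1: "a1!i = (if i\<in>S then (if i\<in>{i\<in>S. a1!i = 1} then 1 else 0) else if i \<in> RR k \<sigma> then \<sigma>!i - 1 else \<sigma>!i div 3)
    \<and> a2!i = (if i\<in>S then (if i\<in>{i\<in>S. a1!i = 1} then 0 else 1) else if i \<in> RR k \<sigma> then \<sigma>!i - 1 else \<sigma>!i div 3)
    \<and> a3!i = (if i \<in> RR k \<sigma> then (if i\<in>S then \<sigma>!i - 1 else 2 - \<sigma>!i) else \<sigma>!i div 3)" if i: "i < k" for i
  proof (cases "i \<in> RR k \<sigma>")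
    case True
    then have r: "\<sigma>!i = 1 \<or> \<sigma>!i = 2" unfolding RR_def by auto
    show ?thesis
    proof (cases "i \<in> S")
      case True
      then have "Suc (a3!i) = \<sigma>!i" using Sm by auto
      from pw3[OF A[OF i] this] True \<open>i \<in> RR k \<sigma>\<close> A(1)[OF i] show ?thesis by auto
    next
      case False
      then have "Suc (a3!i) \<noteq> \<sigma>!i" using Sm \<open>i \<in> RR k \<sigma>\<close> by auto
      from pw2[OF A[OF i] r this] False \<open>i \<in> RR k \<sigma>\<close> show ?thesis by auto
    qed
  next
    case False
    then have "\<sigma>!i \<noteq> 1" "\<sigma>!i \<noteq> 2" "i \<notin> S" using i Sm unfolding RR_def by auto
    from pw1[OF A[OF i] this(1,2)] this False show ?thesis by auto
  qed
  show ?thesis unfolding mk_def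
    by (auto intro!: nth_equalityI simp: L c1)
qed

lemma fiber_card:
  assumes "S \<subseteq> RR k \<sigma>"
  shows "card {\<omega>\<in>Om k \<sigma>. gg k \<sigma> \<omega> = S} = 2 ^ card S"
proof -
  have finS: "finite S" using assms RR_fin finite_subset by blast
  have "bij_betw (mk k \<sigma> S) (Pow S) {\<omega>\<in>Om k \<sigma>. gg k \<sigma> \<omega> = S}"
  proof (rule bij_betw_imageI)
    show "inj_on (mk k \<sigma> S) (Pow S)"
    proof (rule inj_onI)
      fix T1 T2 assume T: "T1 \<in> Pow S" "T2 \<in> Pow S" "mk k \<sigma> S T1 = mk k \<sigma> S T2"
      then have e: "map (\<lambda>i. if i\<in>S then (if i\<in>T1 then 1 else 0) else if i \<in> RR k \<sigma> then \<sigma>!i - 1 else \<sigma>!i div 3) [0..<k]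
        = map (\<lambda>i. if i\<in>S then (if i\<in>T2 then 1 else 0) else if i \<in> RR k \<sigma> then \<sigma>!i - 1 else \<sigma>!i div 3) [0..<k]"
        unfolding mk_def by simp
      have "i \<in> T1 \<longleftrightarrow> i \<in> T2" if "i \<in> S" for i
      proof -
        have "i < k" using that assms unfolding RR_def by auto
        then have "(if i\<in>T1 then 1 else 0::nat) = (if i\<in>T2 then 1 else 0)"
          using arg_cong[OF e, where f="\<lambda>xs. xs ! i"] that by simp
        then show ?thesis by (auto split: if_splits)
      qed
      then show "T1 = T2" using T(1,2) by auto
    qed
    show "mk k \<sigma> S ` Pow S = {\<omega>\<in>Om k \<sigma>. gg k \<sigma> \<omega> = S}"
    proof
      show "mk k \<sigma> S ` Pow S \<subseteq> {\<omega>\<in>Om k \<sigma>. gg k \<sigma> \<omega> = S}" using mk_in assms by auto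
      show "{\<omega>\<in>Om k \<sigma>. gg k \<sigma> \<omega> = S} \<subseteq> mk k \<sigma> S ` Pow S"
      proof
        fix \<omega> assume "\<omega> \<in> {\<omega>\<in>Om k \<sigma>. gg k \<sigma> \<omega> = S}"
        moreover obtain a1 a2 a3 where "\<omega> = (a1, a2, a3)" by (cases \<omega>) auto
        ultimately show "\<omega> \<in> mk k \<sigma> S ` Pow S" using mk_surj by blast
      qed
    qed
  qed
  then have "card {\<omega>\<in>Om k \<sigma>. gg k \<sigma> \<omega> = S} = card (Pow S)" by (simp add: bij_betw_same_card)
  then show ?thesis using card_Pow finS by simp
qed

end

lemma outcomes_fin: "finite (outcomes k)" "outcomes k \<noteq> {}"
proof -
  have "bitvecs k \<subseteq> {xs. set xs \<subseteq> {0,1} \<and> length xs = k}" unfolding bitvecs_def by auto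
  then have "finite (bitvecs k)" using finite_lists_length_eq[of "{0::nat,1}" k] finite_subset by blast
  then show "finite (outcomes k)" unfolding outcomes_def by simp
  have "replicate k 0 \<in> bitvecs k" unfolding bitvecs_def by auto
  then show "outcomes k \<noteq> {}" unfolding outcomes_def by blast
qed

lemma count_card: "count_list xs a = card {i. i < length xs \<and> xs!i = a}"
  by (simp add: count_list_eq_length_filter length_filter_conv_card eq_commute)

lemma RR_card: "length \<sigma> = k \<Longrightarrow> card (RR k \<sigma>) = count_list \<sigma> 1 + count_list \<sigma> 2"
proof -
  assume l: "length \<sigma> = k"
  have "RR k \<sigma> = {i. i < k \<and> \<sigma>!i = 1} \<union> {i. i < k \<and> \<sigma>!i = 2}" unfolding RR_def by auto
  then have "card (RR k \<sigma>) = card {i. i < k \<and> \<sigma>!i = 1} + card {i. i < k \<and> \<sigma>!i = 2}"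
    by (simp add: card_Un_disjoint disjoint_iff)
  then show ?thesis using l by (simp add: count_card)
qed

lemma prefix_eq:
  assumes "prefix_seq n Z = prefix_seq n' Z'"
  shows "n = n'" "\<And>m. m < n \<Longrightarrow> Z m = Z' m"
proof -
  show "n = n'" using arg_cong[OF assms, of length] unfolding prefix_seq_def by simp
  fix m assume "m < n"
  then show "Z m = Z' m" using arg_cong[OF assms, of "\<lambda>xs. xs ! m"] \<open>n = n'\<close> unfolding prefix_seq_def by simp
qed

lemma prefix_cong: "(\<And>m. m < n \<Longrightarrow> Z m = Z' m) \<Longrightarrow> prefix_seq n Z = prefix_seq n Z'"
  unfolding prefix_seq_def by simp

lemma decoder_correct:
  assumes "zero_error_vl_code k \<phi>1 \<phi>2 N \<psi>" "(x1, x2, x3) \<in> outcomes k"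
  shows "\<psi> (prefix_seq (N (x1, x2, x3)) (\<phi>1 x1 x3)) (prefix_seq (N (x1, x2, x3)) (\<phi>2 x2 x3)) = Sigma_sum k (x1, x2, x3)"
proof -
  have "measure_pmf.prob (source_pmf k)
       {(x1, x2, x3). \<psi> (prefix_seq (N (x1, x2, x3)) (\<phi>1 x1 x3))
                          (prefix_seq (N (x1, x2, x3)) (\<phi>2 x2 x3))
                      \<noteq> Sigma_sum k (x1, x2, x3)} = 0" using assms(1) unfolding zero_error_vl_code_def by blast
  then have "outcomes k \<inter> {(x1, x2, x3). \<psi> (prefix_seq (N (x1, x2, x3)) (\<phi>1 x1 x3))
                          (prefix_seq (N (x1, x2, x3)) (\<phi>2 x2 x3))
                      \<noteq> Sigma_sum k (x1, x2, x3)} = {}"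
    unfolding measure_pmf_zero_iff source_pmf_def using outcomes_fin by simp
  then show ?thesis using assms(2) by blast
qed

lemma inj_fiber:
  assumes code: "zero_error_vl_code k \<phi>1 \<phi>2 N \<psi>" and len: "length \<sigma> = k" and s3: "\<forall>i<k. \<sigma>!i \<le> 3"
    and a: "(a1, a2, a3) \<in> Om k \<sigma>" and b: "(b1, b2, b3) \<in> Om k \<sigma>"
    and g: "gg k \<sigma> (a1, a2, a3) = gg k \<sigma> (b1, b2, b3)"
    and o: "code_output \<phi>1 \<phi>2 N (a1, a2, a3) = code_output \<phi>1 \<phi>2 N (b1, b2, b3)"
  shows "(a1, a2, a3) = (b1, b2, b3)"
proof -
  have e3: "a3 = b3" using x3_det[OF len s3 a b g] .
  have stop: "\<And>x1 x2 x3 x1' x2' x3'. (x1, x2, x3) \<in> outcomes k \<Longrightarrow> (x1', x2', x3') \<in> outcomes k \<Longrightarrow>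
        (\<forall>m < N (x1, x2, x3). \<phi>1 x1 x3 m = \<phi>1 x1' x3' m \<and> \<phi>2 x2 x3 m = \<phi>2 x2' x3' m) \<Longrightarrow>
        N (x1', x2', x3') = N (x1, x2, x3)" using code unfolding zero_error_vl_code_def by blast
  have o1: "prefix_seq (N (a1, a2, a3)) (\<phi>1 a1 a3) = prefix_seq (N (b1, b2, b3)) (\<phi>1 b1 b3)"
   and o2: "prefix_seq (N (a1, a2, a3)) (\<phi>2 a2 a3) = prefix_seq (N (b1, b2, b3)) (\<phi>2 b2 b3)"
    using o unfolding code_output_def by auto
  define n where "n = N (a1, a2, a3)"
  have nb: "N (b1, b2, b3) = n" using prefix_eq(1)[OF o1] n_def by simp
  have p1: "\<And>m. m < n \<Longrightarrow> \<phi>1 a1 a3 m = \<phi>1 b1 a3 m" using prefix_eq(2)[OF o1] e3 n_def by simp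
  have p2: "\<And>m. m < n \<Longrightarrow> \<phi>2 a2 a3 m = \<phi>2 b2 a3 m" using prefix_eq(2)[OF o2] e3 n_def by simp
  have aO: "(a1, a2, a3) \<in> outcomes k" and bO: "(b1, b2, b3) \<in> outcomes k" using a b unfolding Om_def by auto
  have sa: "Sigma_sum k (a1, a2, a3) = \<sigma>" using a unfolding Om_def by auto
  have A: "length a1 = k" "length a2 = k" "\<forall>i<k. a1!i + a2!i + a3!i = \<sigma>!i" using a len by (auto simp: Om_iff bitvecs_iff)
  have B: "length b1 = k" "length b2 = k" using b len by (auto simp: Om_iff bitvecs_iff)
  have cO: "(a1, b2, a3) \<in> outcomes k" using aO bO e3 unfolding outcomes_def by auto
  have Nc: "N (a1, b2, a3) = n" using stop[OF aO cO] p2 n_def by auto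
  have "Sigma_sum k (a1, b2, a3) = \<psi> (prefix_seq n (\<phi>1 a1 a3)) (prefix_seq n (\<phi>2 b2 a3))"
    using decoder_correct[OF code cO] Nc by simp
  also have "prefix_seq n (\<phi>2 b2 a3) = prefix_seq n (\<phi>2 a2 a3)" using p2 by (intro prefix_cong) simp
  also have "\<psi> (prefix_seq n (\<phi>1 a1 a3)) (prefix_seq n (\<phi>2 a2 a3)) = \<sigma>"
    using decoder_correct[OF code aO] sa n_def by simp
  finally have "\<forall>i<k. a1!i + b2!i + a3!i = \<sigma>!i" using Sigma_sum_iff[OF len] by blast
  then have e2: "a2 = b2"
  proof (intro nth_equalityI)
    fix i assume H: "\<forall>i<k. a1!i + b2!i + a3!i = \<sigma>!i" "i < length a2"
    then show "a2!i = b2!i" using A H by (metis add_right_cancel add_left_cancel)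
  qed (use A B in simp)
  have dO: "(b1, a2, a3) \<in> outcomes k" using aO bO e3 unfolding outcomes_def by auto
  have Nd: "N (b1, a2, a3) = n" using stop[OF aO dO] p1 n_def by auto
  have "Sigma_sum k (b1, a2, a3) = \<psi> (prefix_seq n (\<phi>1 b1 a3)) (prefix_seq n (\<phi>2 a2 a3))"
    using decoder_correct[OF code dO] Nd by simp
  also have "prefix_seq n (\<phi>1 b1 a3) = prefix_seq n (\<phi>1 a1 a3)" using p1 by (intro prefix_cong) simp
  also have "\<psi> (prefix_seq n (\<phi>1 a1 a3)) (prefix_seq n (\<phi>2 a2 a3)) = \<sigma>"
    using decoder_correct[OF code aO] sa n_def by simp
  finally have "\<forall>i<k. b1!i + a2!i + a3!i = \<sigma>!i" using Sigma_sum_iff[OF len] by blast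
  then have e1: "a1 = b1"
  proof (intro nth_equalityI)
    fix i assume H: "\<forall>i<k. b1!i + a2!i + a3!i = \<sigma>!i" "i < length a1"
    then show "a1!i = b1!i" using A H by (metis add_right_cancel)
  qed (use A B in simp)
  show ?thesis using e1 e2 e3 by simp
qed

lemma cond_eq:
  assumes "Om k \<sigma> \<noteq> {}"
  shows "cond_pmf (source_pmf k) {\<omega>. Sigma_sum k \<omega> = \<sigma>} = pmf_of_set (Om k \<sigma>)"
proof -
  define A where "A = outcomes k"
  define B where "B = {\<omega>. Sigma_sum k \<omega> = \<sigma>}"
  have OAB: "Om k \<sigma> = A \<inter> B" unfolding Om_def A_def B_def by auto
  have fA: "finite A" "A \<noteq> {}" using outcomes_fin unfolding A_def by auto
  have ne: "set_pmf (source_pmf k) \<inter> B \<noteq> {}" using assms fA unfolding source_pmf_def OAB A_def by simp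
  have cA: "card A > 0" using fA by (simp add: card_gt_0_iff)
  have cAB: "card (A \<inter> B) > 0" using assms fA OAB by (simp add: card_gt_0_iff)
  show ?thesis
  proof (rule pmf_eqI)
    fix \<omega>
    show "pmf (cond_pmf (source_pmf k) {\<omega>. Sigma_sum k \<omega> = \<sigma>}) \<omega> = pmf (pmf_of_set (Om k \<sigma>)) \<omega>"
      unfolding B_def[symmetric] pmf_cond[OF ne] OAB
      using fA assms OAB cA cAB unfolding source_pmf_def A_def[symmetric]
      by (auto simp: measure_pmf_of_set indicator_def)
  qed
qed

lemma cell_bound:
  fixes \<phi> :: "nat \<Rightarrow> real" and g :: "'w \<Rightarrow> 'i" and f :: "'w \<Rightarrow> 'c"
  assumes "finite G" "finite \<Omega>" "g ` \<Omega> \<subseteq> G"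
   and inj: "\<And>a b. a\<in>\<Omega> \<Longrightarrow> b\<in>\<Omega> \<Longrightarrow> g a = g b \<Longrightarrow> f a = f b \<Longrightarrow> a = b"
   and phi0: "\<phi> 0 = 0"
   and mono: "\<And>a b. a \<le> b \<Longrightarrow> \<phi> (Suc a) - \<phi> a \<le> \<phi> (Suc b) - \<phi> b"
   and K: "\<And>i. i \<in> G \<Longrightarrow> card {w\<in>\<Omega>. g w = i} \<le> K"
  shows "(\<Sum>c\<in>f`\<Omega>. \<phi> (card {w\<in>\<Omega>. f w = c})) \<le> (\<Sum>j<K. \<phi> (card {i\<in>G. j < card {w\<in>\<Omega>. g w = i}}))"
  using assms(1-3) inj K
proof (induction "card G" arbitrary: G \<Omega> rule: less_induct)
  case less
  show ?case
  proof (cases "G = {}")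
    case True
    then have "\<Omega> = {}" using less.prems by auto
    then show ?thesis using True phi0 by simp
  next
    case False
    define n where "n i = card {w\<in>\<Omega>. g w = i}" for i
    have fin: "finite (n ` G)" using less.prems by auto
    have "Min (n ` G) \<in> n ` G" using fin False by (intro Min_in) auto
    then obtain i0 where i0: "i0 \<in> G" "n i0 = Min (n ` G)" by auto
    have i0min: "n i0 \<le> n i" if "i \<in> G" for i using i0 fin that by simp
    define F0 where "F0 = {w\<in>\<Omega>. g w = i0}"
    define \<Omega>' where "\<Omega>' = \<Omega> - F0"
    define G' where "G' = G - {i0}"
    define D where "D = \<phi> (card G) - \<phi> (card G')"
    have cG: "card G = Suc (card G')" using i0 less.prems(1) unfolding G'_def
      by (metis card_Suc_Diff1)
    have fibs: "{w\<in>\<Omega>'. g w = i} = {w\<in>\<Omega>. g w = i}" if "i \<in> G'" for i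
      using that unfolding \<Omega>'_def F0_def G'_def by auto
    have IH: "(\<Sum>c\<in>f`\<Omega>'. \<phi> (card {w\<in>\<Omega>'. f w = c})) \<le> (\<Sum>j<K. \<phi> (card {i\<in>G'. j < card {w\<in>\<Omega>'. g w = i}}))"
    proof (rule less.hyps)
      show "card G' < card G" using cG by simp
      show "finite G'" "finite \<Omega>'" using less.prems unfolding G'_def \<Omega>'_def by auto
      show "g ` \<Omega>' \<subseteq> G'" using less.prems unfolding G'_def \<Omega>'_def F0_def by auto
      show "\<And>a b. a \<in> \<Omega>' \<Longrightarrow> b \<in> \<Omega>' \<Longrightarrow> g a = g b \<Longrightarrow> f a = f b \<Longrightarrow> a = b"
        using less.prems unfolding \<Omega>'_def by auto
      show "\<And>i. i \<in> G' \<Longrightarrow> card {w \<in> \<Omega>'. g w = i} \<le> K"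
        using fibs less.prems unfolding G'_def by auto
    qed
    have RHS': "(\<Sum>j<K. \<phi> (card {i\<in>G'. j < card {w\<in>\<Omega>'. g w = i}})) = (\<Sum>j<K. \<phi> (card {i\<in>G'. j < n i}))"
      using fibs unfolding n_def by (intro sum.cong refl arg_cong[where f=\<phi>] arg_cong[where f=card]) auto
    have Tj: "\<phi> (card {i\<in>G. j < n i}) = \<phi> (card {i\<in>G'. j < n i}) + (if j < n i0 then D else 0)" for j
    proof (cases "j < n i0")
      case True
      then have "{i\<in>G. j < n i} = G" using i0min by (auto intro: less_le_trans)
      moreover have "{i\<in>G'. j < n i} = G'" using True i0min unfolding G'_def by (auto intro: less_le_trans)
      ultimately show ?thesis using True unfolding D_def by simp
    next
      case False
      then have "{i\<in>G. j < n i} = {i\<in>G'. j < n i}" unfolding G'_def by auto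
      then show ?thesis using False by simp
    qed
    have n0K: "n i0 \<le> K" using less.prems(5)[OF i0(1)] unfolding n_def by simp
    have RHS: "(\<Sum>j<K. \<phi> (card {i\<in>G. j < n i})) = (\<Sum>j<K. \<phi> (card {i\<in>G'. j < n i})) + n i0 * D"
    proof -
      have "(\<Sum>j<K. (if j < n i0 then D else 0)) = (\<Sum>j\<in>{..<K} \<inter> {j. j < n i0}. D)"
        by (subst sum.inter_restrict) auto
      also have "{..<K} \<inter> {j. j < n i0} = {..<n i0}" using n0K by auto
      finally have "(\<Sum>j<K. (if j < n i0 then D else 0)) = n i0 * D" by simp
      then show ?thesis using Tj by (simp add: sum.distrib)
    qed
    define a where "a c = card {w\<in>\<Omega>'. f w = c}" for c
    have finO: "finite \<Omega>" using less.prems by simp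
    have split: "card {w\<in>\<Omega>. f w = c} = a c + (if c \<in> f ` F0 then 1 else 0)" for c
    proof -
      have U: "{w\<in>\<Omega>. f w = c} = {w\<in>\<Omega>'. f w = c} \<union> {w\<in>F0. f w = c}"
        unfolding \<Omega>'_def F0_def by auto
      have c2: "card {w\<in>F0. f w = c} = (if c \<in> f ` F0 then 1 else 0)"
      proof (cases "c \<in> f ` F0")
        case True
        then obtain w0 where "w0 \<in> F0" "f w0 = c" by auto
        then have "{w\<in>F0. f w = c} = {w0}" using less.prems(4) unfolding F0_def by auto
        then show ?thesis using True by simp
      next
        case False
        then have "{w\<in>F0. f w = c} = {}" by auto
        then show ?thesis using False by (metis card.empty)
      qed
      have "card {w\<in>\<Omega>. f w = c} = card {w\<in>\<Omega>'. f w = c} + card {w\<in>F0. f w = c}"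
        unfolding U using finO by (intro card_Un_disjoint) (auto simp: \<Omega>'_def F0_def)
      then show ?thesis using c2 a_def by simp
    qed
    have aleq: "a c \<le> card G'" for c
    proof -
      have "inj_on g {w\<in>\<Omega>'. f w = c}" using less.prems(4) unfolding \<Omega>'_def by (auto intro: inj_onI)
      moreover have "g ` {w\<in>\<Omega>'. f w = c} \<subseteq> G'" using less.prems(3) unfolding \<Omega>'_def F0_def G'_def by auto
      ultimately show ?thesis unfolding a_def using less.prems(1) G'_def
        by (meson card_inj_on_le finite_Diff)
    qed
    have LHS': "(\<Sum>c\<in>f`\<Omega>'. \<phi> (card {w\<in>\<Omega>'. f w = c})) = (\<Sum>c\<in>f`\<Omega>. \<phi> (a c))"
      unfolding a_def
    proof (rule sum.mono_neutral_left)
      show "finite (f ` \<Omega>)" using finO by simp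
      show "f ` \<Omega>' \<subseteq> f ` \<Omega>" unfolding \<Omega>'_def by auto
      show "\<forall>i\<in>f ` \<Omega> - f ` \<Omega>'. \<phi> (card {w \<in> \<Omega>'. f w = i}) = 0"
      proof
        fix c assume "c \<in> f ` \<Omega> - f ` \<Omega>'"
        then have "{w \<in> \<Omega>'. f w = c} = {}" by (auto simp: image_iff)
        then show "\<phi> (card {w \<in> \<Omega>'. f w = c}) = 0" using phi0 by (metis card.empty)
      qed
    qed
    have LHS: "(\<Sum>c\<in>f`\<Omega>. \<phi> (card {w\<in>\<Omega>. f w = c})) \<le> (\<Sum>c\<in>f`\<Omega>. \<phi> (a c)) + n i0 * D"
    proof -
      have "(\<Sum>c\<in>f`\<Omega>. \<phi> (card {w\<in>\<Omega>. f w = c})) = (\<Sum>c\<in>f`\<Omega>. \<phi> (a c) + (if c \<in> f ` F0 then \<phi> (Suc (a c)) - \<phi> (a c) else 0))"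
        using split by (intro sum.cong) auto
      also have "\<dots> = (\<Sum>c\<in>f`\<Omega>. \<phi> (a c)) + (\<Sum>c\<in>f`\<Omega>. (if c \<in> f ` F0 then \<phi> (Suc (a c)) - \<phi> (a c) else 0))"
        by (simp add: sum.distrib)
      also have "(\<Sum>c\<in>f`\<Omega>. (if c \<in> f ` F0 then \<phi> (Suc (a c)) - \<phi> (a c) else 0)) = (\<Sum>c\<in>f`F0. \<phi> (Suc (a c)) - \<phi> (a c))"
      proof -
        have "f ` \<Omega> \<inter> {c. c \<in> f ` F0} = f ` F0" unfolding F0_def by auto
        then show ?thesis by (simp add: sum.inter_restrict[symmetric] finO)
      qed
      also have "\<dots> \<le> (\<Sum>c\<in>f`F0. D)"
        using mono[OF aleq] cG unfolding D_def by (intro sum_mono) simp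
      also have "\<dots> = card (f ` F0) * D" by simp
      also have "card (f ` F0) = n i0"
      proof -
        have "inj_on f F0" using less.prems(4) unfolding F0_def by (auto intro: inj_onI)
        then show ?thesis unfolding n_def F0_def by (simp add: card_image)
      qed
      finally show ?thesis by simp
    qed
    show ?thesis using LHS LHS' IH RHS' RHS unfolding n_def by linarith
  qed
qed

lemma xlnx_convex: "convex_on {0<..} (\<lambda>x::real. x * ln x)"
proof (rule convex_on_realI[where f'="\<lambda>x. ln x + 1"])
  show "connected {0::real<..}" by simp
  fix x :: real assume "x \<in> {0<..}"
  then show "((\<lambda>x. x * ln x) has_real_derivative ln x + 1) (at x)"
    by (auto intro!: derivative_eq_intros)
next
  fix x y :: real assume "x \<in> {0<..}" "y \<in> {0<..}" "x \<le> y"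
  then show "ln x + 1 \<le> ln y + 1" by simp
qed

lemma phi_step: "real (Suc s) * log 2 (real (Suc s)) - real s * log 2 (real s)
   \<le> real (Suc (Suc s)) * log 2 (real (Suc (Suc s))) - real (Suc s) * log 2 (real (Suc s))"
proof (cases "s = 0")
  case True
  then show ?thesis by simp
next
  case False
  define h where "h = (\<lambda>x::real. x * ln x)"
  have "h ((1 - 1/2) *\<^sub>R real s + (1/2) *\<^sub>R real (Suc (Suc s))) \<le> (1 - 1/2) * h (real s) + (1/2) * h (real (Suc (Suc s)))"
    using False unfolding h_def by (intro convex_onD[OF xlnx_convex]) auto
  moreover have "(1 - 1/2) *\<^sub>R real s + (1/2) *\<^sub>R real (Suc (Suc s)) = real (Suc s)" by (simp add: field_simps)
  ultimately have "2 * h (real (Suc s)) \<le> h (real s) + h (real (Suc (Suc s)))" by simp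
  then have "(h (real (Suc s)) - h (real s)) / ln 2 \<le> (h (real (Suc (Suc s))) - h (real (Suc s))) / ln 2"
    by (intro divide_right_mono) auto
  moreover have eq: "real t * log 2 (real t) = h (real t) / ln 2" for t
    unfolding h_def log_def by simp
  ultimately show ?thesis unfolding eq by (simp add: diff_divide_distrib)
qed

lemma phi_mono: "a \<le> b \<Longrightarrow> real (Suc a) * log 2 (real (Suc a)) - real a * log 2 (real a)
   \<le> real (Suc b) * log 2 (real (Suc b)) - real b * log 2 (real b)"
proof (induction b rule: dec_induct)
  case base then show ?case by simp
next
  case (step n) then show ?case using phi_step[of n] by linarith
qed

lemma sum_list_concat_nat: "sum_list (concat xss) = sum_list (map sum_list (xss :: nat list list))"
  by (induct xss) auto

lemma clumpy_len: "length (clumpy_n m) = 2 ^ m"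
proof -
  have "length (clumpy_n m) = (\<Sum>u\<leftarrow>[0..<m+1]. m choose u)"
    unfolding clumpy_n_def by (simp add: length_concat o_def)
  also have "\<dots> = (\<Sum>u\<in>{0..<m+1}. m choose u)" by (simp only: interv_sum_list_conv_sum_set_nat set_upt)
  also have "{0..<m+1} = {..m}" by auto
  finally show ?thesis using choose_row_sum by simp
qed

lemma clumpy_count: "card {i. i < 2^m \<and> j < clumpy_n m ! i} = (\<Sum>u\<in>{0..m}. if j < 2^(m-u) then m choose u else 0)"
proof -
  have "card {i. i < 2^m \<and> j < clumpy_n m ! i} = length (filter (\<lambda>a. j < a) (clumpy_n m))"
    by (simp add: length_filter_conv_card clumpy_len)
  also have "\<dots> = (\<Sum>u\<leftarrow>[0..<m+1]. if j < 2^(m-u) then m choose u else 0)"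
    unfolding clumpy_n_def filter_concat length_concat map_map
    by (intro arg_cong[where f=sum_list] map_cong) (auto simp: filter_replicate)
  also have "\<dots> = (\<Sum>u\<in>{0..<m+1}. if j < 2^(m-u) then m choose u else 0)"
    by (simp only: interv_sum_list_conv_sum_set_nat set_upt)
  also have "{0..<m+1} = {0..m}" by auto
  finally show ?thesis .
qed

lemma clumpy_count': "card {i. i < 2^m \<and> j < clumpy_n m ! i} = (\<Sum>s\<in>{0..m}. if j < 2^s then m choose s else 0)"
proof -
  have "(\<Sum>u\<in>{0..m}. if j < 2^(m-u) then m choose u else 0) = (\<Sum>u\<in>{0..m}. if j < 2^(m-u) then m choose (m-u) else 0)"
    by (intro sum.cong refl) (auto simp: binomial_symmetric[symmetric])
  also have "\<dots> = (\<Sum>s\<in>{0..m}. if j < 2^s then m choose s else 0)"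
    by (rule sum.reindex_bij_witness[where i="\<lambda>s. m - s" and j="\<lambda>u. m - u"]) auto
  finally show ?thesis using clumpy_count by simp
qed

lemma clumpy_sum: "sum_list (clumpy_n m) = 3 ^ m"
proof -
  have "sum_list (clumpy_n m) = (\<Sum>u\<leftarrow>[0..<m+1]. (m choose u) * 2 ^ (m - u))"
    unfolding clumpy_n_def by (simp add: sum_list_concat_nat o_def sum_list_replicate del: upt_Suc)
  also have "\<dots> = (\<Sum>u\<in>{0..<m+1}. (m choose u) * 2 ^ (m - u))" by (simp only: interv_sum_list_conv_sum_set_nat set_upt)
  also have "{0..<m+1} = {..m}" by auto
  also have "(\<Sum>u\<in>{..m}. (m choose u) * 2 ^ (m - u)) = 3 ^ m"
  proof -
    have "(1+2::nat)^m = (\<Sum>u\<le>m. of_nat (m choose u) * 1^u * 2^(m-u))" by (rule binomial_ring)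
    then show ?thesis by (simp add: numeral_3_eq_3)
  qed
  finally show ?thesis by simp
qed

lemma clumpy_le: "i < 2^m \<Longrightarrow> clumpy_n m ! i \<le> 2 ^ m"
proof -
  assume "i < 2^m"
  then have "clumpy_n m ! i \<in> set (clumpy_n m)" using clumpy_len by simp
  then show ?thesis unfolding clumpy_n_def by (auto split: if_splits)
qed

lemma clumpy_p_eq: "clumpy_p x y = map (\<lambda>j. real (card {i. i < 2^(x+y) \<and> j < clumpy_n (x+y) ! i}) / 3^(x+y)) [0..<2^(x+y)]"
  unfolding clumpy_p_def Let_def
proof (intro map_cong refl)
  fix j assume "j \<in> set [0..<2 ^ (x + y)]"
  then have j: "j < 2^(x+y)" by simp
  have "(\<Sum>i<2 ^ (x+y). clumpy_e (x+y) i ! j) = (\<Sum>i<2 ^ (x+y). if j < clumpy_n (x+y) ! i then 1 else 0)"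
    using j unfolding clumpy_e_def by simp
  also have "\<dots> = real (card {i. i < 2^(x+y) \<and> j < clumpy_n (x+y) ! i})"
    by (simp add: sum.If_cases lessThan_def Collect_conj_eq)
  finally show "(\<Sum>i<2 ^ (x+y). clumpy_e (x+y) i ! j) / 3 ^ (x+y) = real (card {i. i < 2^(x+y) \<and> j < clumpy_n (x+y) ! i}) / 3^(x+y)"
    by simp
qed

lemma sum_thresholds:
  assumes "finite G" "\<And>i. i \<in> G \<Longrightarrow> n i \<le> K"
  shows "(\<Sum>j<K. card {i\<in>G. j < n i}) = (\<Sum>i\<in>G. n i)"
proof -
  have "(\<Sum>j<K. card {i\<in>G. j < n i}) = (\<Sum>j<K. \<Sum>i\<in>G. if j < n i then 1 else 0)"
  proof (intro sum.cong refl)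
    fix j show "card {i\<in>G. j < n i} = (\<Sum>i\<in>G. if j < n i then 1 else 0)"
      using sum.inter_filter[OF assms(1), of "\<lambda>_. 1::nat" "\<lambda>i. j < n i"] by simp
  qed
  also have "\<dots> = (\<Sum>i\<in>G. \<Sum>j<K. if j < n i then 1 else 0)" by (rule sum.swap)
  also have "\<dots> = (\<Sum>i\<in>G. n i)"
  proof (intro sum.cong refl)
    fix i assume "i \<in> G"
    then have e: "{j\<in>{..<K}. j < n i} = {..<n i}" using assms(2)[OF \<open>i \<in> G\<close>] by auto
    have "(\<Sum>j<K. if j < n i then 1 else 0) = (\<Sum>j\<in>{j\<in>{..<K}. j < n i}. (1::nat))"
      using sum.inter_filter[of "{..<K}" "\<lambda>_. 1::nat" "\<lambda>j. j < n i"] by simp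
    then show "(\<Sum>j<K. if j < n i then 1 else 0) = n i" unfolding e by simp
  qed
  finally show ?thesis .
qed
lemma card_fibers:
  assumes "finite \<Omega>" "finite G" "g ` \<Omega> \<subseteq> G"
  shows "(\<Sum>i\<in>G. card {w\<in>\<Omega>. g w = i}) = card \<Omega>"
proof -
  have "(\<Sum>i\<in>G. sum (\<lambda>_. 1::nat) {w. w \<in> \<Omega> \<and> g w = i}) = sum (\<lambda>_. 1) \<Omega>"
    by (rule sum.group[OF assms])
  then show ?thesis by simp
qed

lemma entropy_map_uniform:
  assumes "finite \<Omega>" "\<Omega> \<noteq> {}"
  shows "entropy_pmf (map_pmf f (pmf_of_set \<Omega>)) =
     log 2 (card \<Omega>) - (\<Sum>c\<in>f`\<Omega>. real (card {w\<in>\<Omega>. f w = c}) * log 2 (real (card {w\<in>\<Omega>. f w = c}))) / card \<Omega>"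
proof -
  define n where "n c = card {w\<in>\<Omega>. f w = c}" for c
  define M where "M = card \<Omega>"
  have M0: "M > 0" using assms unfolding M_def by (simp add: card_gt_0_iff)
  have pm: "pmf (map_pmf f (pmf_of_set \<Omega>)) c = n c / M" for c
  proof -
    have "\<Omega> \<inter> f -` {c} = {w\<in>\<Omega>. f w = c}" by auto
    then show ?thesis using assms unfolding n_def M_def by (simp add: pmf_map measure_pmf_of_set)
  qed
  have npos: "n c > 0" if "c \<in> f ` \<Omega>" for c
    using that assms unfolding n_def by (auto simp: card_gt_0_iff)
  have sumn: "(\<Sum>c\<in>f`\<Omega>. n c) = M"
    unfolding n_def M_def by (rule card_fibers) (use assms in auto)
  have "entropy_pmf (map_pmf f (pmf_of_set \<Omega>)) = - (\<Sum>c\<in>f`\<Omega>. (n c / M) * log 2 (n c / M))"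
    unfolding entropy_pmf_def using assms by (simp add: pm)
  also have "\<dots> = - (\<Sum>c\<in>f`\<Omega>. (n c * log 2 (n c)) / M - (n c / M) * log 2 M)"
  proof -
    have "(n c / M) * log 2 (n c / M) = (n c * log 2 (n c)) / M - (n c / M) * log 2 M" if "c \<in> f`\<Omega>" for c
      using npos[OF that] M0 by (simp add: log_divide algebra_simps)
    then show ?thesis by (intro arg_cong[where f=uminus] sum.cong) auto
  qed
  also have "\<dots> = (\<Sum>c\<in>f`\<Omega>. n c) / M * log 2 M - (\<Sum>c\<in>f`\<Omega>. n c * log 2 (n c)) / M"
    by (simp add: sum_subtractf sum_divide_distrib[symmetric] sum_distrib_right[symmetric])
  also have "\<dots> = log 2 M - (\<Sum>c\<in>f`\<Omega>. n c * log 2 (n c)) / M"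
    using sumn M0 by (simp flip: of_nat_sum)
  finally show ?thesis unfolding n_def M_def .
qed

lemma entropy_vec_counts:
  fixes t :: "nat \<Rightarrow> nat" and M :: nat
  assumes "(\<Sum>j<K. t j) = M" "M > 0"
  shows "entropy_vec (map (\<lambda>j. real (t j) / M) [0..<K]) = log 2 M - (\<Sum>j<K. real (t j) * log 2 (real (t j))) / M"
proof -
  have tm: "(if real (t j) / M = 0 then 0 else real (t j) / M * log 2 (real (t j) / M))
      = real (t j) * log 2 (real (t j)) / M - real (t j) / M * log 2 M" for j
  proof (cases "t j = 0")
    case True then show ?thesis by simp
  next
    case False then show ?thesis using assms(2) by (simp add: log_divide algebra_simps)
  qed
  have "entropy_vec (map (\<lambda>j. real (t j) / M) [0..<K]) = - (\<Sum>j<K. real (t j) * log 2 (real (t j)) / M - real (t j) / M * log 2 M)"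
  proof -
    have "entropy_vec (map (\<lambda>j. real (t j) / M) [0..<K]) = - (\<Sum>j<K. (if real (t j) / M = 0 then 0 else real (t j) / M * log 2 (real (t j) / M)))"
      unfolding entropy_vec_def by (simp only: map_map o_def interv_sum_list_conv_sum_set_nat set_upt atLeast0LessThan)
    then show ?thesis by (simp only: tm)
  qed
  also have "\<dots> = (\<Sum>j<K. real (t j)) / M * log 2 M - (\<Sum>j<K. real (t j) * log 2 (real (t j))) / M"
    by (simp add: sum_subtractf sum_divide_distrib[symmetric] sum_distrib_right[symmetric])
  also have "(\<Sum>j<K. real (t j)) = M" using assms(1) by (simp flip: of_nat_sum)
  finally show ?thesis using assms(2) by simp
qed

theorem mainTheorem10:
  fixes k x y :: nat
    and \<phi>1 \<phi>2 :: "nat list \<Rightarrow> nat list \<Rightarrow> nat \<Rightarrow> 'z::finite"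
    and N :: "nat list \<times> nat list \<times> nat list \<Rightarrow> nat"
    and \<psi> :: "'z list \<Rightarrow> 'z list \<Rightarrow> nat list"
    and \<sigma> :: "nat list"
  assumes "CARD('z) \<ge> 2"
    and "zero_error_vl_code k \<phi>1 \<phi>2 N \<psi>"
    and "length \<sigma> = k" and "set \<sigma> \<subseteq> {0, 1, 2, 3}"
    and "count_list \<sigma> 1 = x" and "count_list \<sigma> 2 = y"
  shows "cond_output_entropy k \<phi>1 \<phi>2 N \<sigma> \<ge> entropy_vec (clumpy_p x y)"
proof -
  define m where "m = x + y"
  define \<Omega> where "\<Omega> = Om k \<sigma>"
  define R where "R = RR k \<sigma>"
  define out where "out = code_output \<phi>1 \<phi>2 N"
  define \<phi> where "\<phi> = (\<lambda>t::nat. real t * log 2 (real t))"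
  define t where "t j = card {i. i < 2^m \<and> j < clumpy_n m ! i}" for j
  have len: "length \<sigma> = k" using assms(3) .
  have s3: "\<forall>i<k. \<sigma>!i \<le> 3"
  proof (intro allI impI)
    fix i assume "i < k"
    then have "\<sigma>!i \<in> {0,1,2,3}" using assms(3,4) nth_mem by blast
    then show "\<sigma>!i \<le> 3" by auto
  qed
  have cR: "card R = m" unfolding R_def m_def using RR_card[OF len] assms(5,6) by simp
  have finR: "finite R" unfolding R_def by (rule RR_fin[OF len s3])
  have finO: "finite \<Omega>" unfolding \<Omega>_def Om_def using outcomes_fin(1) by simp
  have fib: "card {w\<in>\<Omega>. gg k \<sigma> w = S} = 2 ^ card S" if "S \<subseteq> R" for S
    unfolding \<Omega>_def using fiber_card[OF len s3] that R_def by simp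
  have One: "\<Omega> \<noteq> {}" using fib[of "{}"] by auto
  have gim: "gg k \<sigma> ` \<Omega> \<subseteq> Pow R" unfolding R_def gg_def by (auto split: prod.splits)
  have injf: "a = b" if "a \<in> \<Omega>" "b \<in> \<Omega>" "gg k \<sigma> a = gg k \<sigma> b" "out a = out b" for a b
    using inj_fiber[OF assms(2) len s3, of "fst a" "fst (snd a)" "snd (snd a)" "fst b" "fst (snd b)" "snd (snd b)"]
      that unfolding \<Omega>_def out_def by simp
  have LHS: "cond_output_entropy k \<phi>1 \<phi>2 N \<sigma> = log 2 (card \<Omega>) - (\<Sum>c\<in>out`\<Omega>. \<phi> (card {w\<in>\<Omega>. out w = c})) / card \<Omega>"
    unfolding cond_output_entropy_def cond_eq[OF One[unfolded \<Omega>_def]] \<Omega>_def[symmetric] out_def[symmetric] \<phi>_def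
    by (rule entropy_map_uniform[OF finO One])
  have key: "(\<Sum>c\<in>out`\<Omega>. \<phi> (card {w\<in>\<Omega>. out w = c})) \<le> (\<Sum>j<2^m. \<phi> (card {S\<in>Pow R. j < card {w\<in>\<Omega>. gg k \<sigma> w = S}}))"
  proof (rule cell_bound[OF _ finO gim injf])
    show "finite (Pow R)" using finR by simp
    show "\<phi> 0 = 0" unfolding \<phi>_def by simp
    show "\<And>a b. a \<le> b \<Longrightarrow> \<phi> (Suc a) - \<phi> a \<le> \<phi> (Suc b) - \<phi> b" unfolding \<phi>_def by (rule phi_mono)
    show "\<And>S. S \<in> Pow R \<Longrightarrow> card {w\<in>\<Omega>. gg k \<sigma> w = S} \<le> 2^m"
      using fib cR finR by (auto intro: power_increasing card_mono)
  qed auto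
  have grp: "card {S\<in>Pow R. j < 2^card S} = (\<Sum>s\<in>{0..m}. if j < 2^s then m choose s else 0)" for j
  proof -
    define A where "A = {S\<in>Pow R. j < 2^card S}"
    have "card ` A \<subseteq> {0..m}" unfolding A_def using cR finR by (auto intro: card_mono)
    moreover have "finite A" unfolding A_def using finR by simp
    ultimately have "(\<Sum>s\<in>{0..m}. sum (\<lambda>_. 1::nat) {S. S \<in> A \<and> card S = s}) = sum (\<lambda>_. 1) A"
      by (intro sum.group) auto
    moreover have "card {S. S \<in> A \<and> card S = s} = (if j < 2^s then m choose s else 0)" for s
    proof -
      have "{S. S \<in> A \<and> card S = s} = (if j < 2^s then {S. S \<subseteq> R \<and> card S = s} else {})"
        unfolding A_def by auto
      then show ?thesis using n_subsets[OF finR, of s] cR by simp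
    qed
    ultimately show ?thesis unfolding A_def by simp
  qed
  have tj: "card {S\<in>Pow R. j < card {w\<in>\<Omega>. gg k \<sigma> w = S}} = t j" for j
  proof -
    have "{S\<in>Pow R. j < card {w\<in>\<Omega>. gg k \<sigma> w = S}} = {S\<in>Pow R. j < 2^card S}" using fib by auto
    then show ?thesis unfolding t_def using grp clumpy_count' by simp
  qed
  have sumt: "(\<Sum>j<2^m. t j) = 3^m"
  proof -
    have "(\<Sum>j<2^m. t j) = (\<Sum>i\<in>{..<2^m}. clumpy_n m ! i)"
      unfolding t_def using sum_thresholds[of "{..<2^m}" "\<lambda>i. clumpy_n m ! i" "2^m"] clumpy_le
      by (simp add: lessThan_def)
    also have "\<dots> = sum_list (clumpy_n m)" by (simp add: sum_list_sum_nth clumpy_len atLeast0LessThan)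
    finally show ?thesis using clumpy_sum by simp
  qed
  have cO: "card \<Omega> = 3^m"
  proof -
    have "card \<Omega> = (\<Sum>S\<in>Pow R. card {w\<in>\<Omega>. gg k \<sigma> w = S})"
      using card_fibers[OF finO _ gim] finR by simp
    also have "\<dots> = (\<Sum>S\<in>Pow R. (2::nat) ^ card S)" using fib by (intro sum.cong) auto
    also have "\<dots> = (\<Sum>j<2^m. card {S\<in>Pow R. j < (2::nat) ^ card S})"
    proof -
      have "\<And>S. S \<in> Pow R \<Longrightarrow> (2::nat) ^ card S \<le> 2^m"
        using finR cR by (auto intro: power_increasing card_mono)
      then show ?thesis using sum_thresholds[of "Pow R" "\<lambda>S. (2::nat) ^ card S" "2^m"] finR by simp
    qed
    also have "\<dots> = (\<Sum>j<2^m. t j)"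
    proof (intro sum.cong refl)
      fix j show "card {S\<in>Pow R. j < (2::nat) ^ card S} = t j"
        unfolding tj[symmetric] using fib by (intro arg_cong[where f=card]) auto
    qed
    finally show ?thesis using sumt by simp
  qed
  have RHS: "entropy_vec (clumpy_p x y) = log 2 (3^m) - (\<Sum>j<2^m. \<phi> (t j)) / 3^m"
  proof -
    have "clumpy_p x y = map (\<lambda>j. real (t j) / real (3^m::nat)) [0..<2^m]"
      using clumpy_p_eq[of x y] unfolding t_def m_def by simp
    then show ?thesis using entropy_vec_counts[OF sumt] unfolding \<phi>_def by simp
  qed
  have "(\<Sum>c\<in>out`\<Omega>. \<phi> (card {w\<in>\<Omega>. out w = c})) \<le> (\<Sum>j<2^m. \<phi> (t j))"
    using key tj by simp
  then have "(\<Sum>c\<in>out`\<Omega>. \<phi> (card {w\<in>\<Omega>. out w = c})) / 3^m \<le> (\<Sum>j<2^m. \<phi> (t j)) / 3^m"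
    by (intro divide_right_mono) auto
  then show ?thesis unfolding LHS RHS cO by simp
qed

end
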